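(* Let $M(t)\subset\mathbb{R}^2$, $t\ge0$, be a smooth one-parameter family of bounded, simply connected open sets whose boundaries $\partial M(t)$ do not self-intersect, generated by the flow of a velocity field $\mathbf v$, and let $\rho(t,\cdot)>0$ be a density supported on $\bar M(t)$ with $\int_{M(t)}\rho=1$, evolving by $$\partial_t\rho=-\nabla\cdot(\rho\mathbf v)\ \text{ in }\mathring M(t),\qquad \partial_t\mathbf r=\mathbf v\ \text{ on }\partial M(t).$$ Parametrize the boundary points (boundary agents) by $\gamma\in[0,1)$, with position $\mathbf r(t,\gamma)\in\partial M(t)$, let $M^*$ be a target domain whose boundary is the closed curve $\mathbf r^*:[0,1]\to\partial M^*$, and let $\mathbf e(t,\gamma)=\mathbf r(t,\gamma)-\mathbf r^*(\gamma)$. Apply the control law $$\mathbf v=-\frac{\nabla\rho}{\rho}\ \text{ in }\mathring M(t),\qquad \partial_t\mathbf v=-\mathbf e-\mathbf v\ \text{ on }\partial M(t).$$ Assume the resulting system is well posed, that $\rho(t,\cdot)$ is sufficiently smooth and bounded in $H^1(\cup_t M(t))$, that the components of $\mathbf v$ are bounded in $H^1(\cup_t M(t))$, and that the velocity of the parametrized boundary is bounded in $H^1((0,1))$. Then, from any initial domain $M_0=M(0)$ with smooth boundary, $M(t)$ converges to $M^*$ as $t\to\infty$.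
   Context: $H^1=W^{1,2}$ denotes the Sobolev space. The boundary positions $\mathbf r(t,\gamma)$ are assumed known to the boundary agents (computed from boundary localization and integration of their velocities). *)

theory Defs
  imports "HOL-Analysis.Analysis"
begin

definition grad :: "(real^'n \<Rightarrow> real) \<Rightarrow> real^'n \<Rightarrow> real^'n" where
  "grad f x = (\<chi> i. frechet_derivative f (at x) (axis i 1))"

definition divergence :: "(real^'n \<Rightarrow> real^'n) \<Rightarrow> real^'n \<Rightarrow> real" where
  "divergence F x = (\<Sum>i\<in>UNIV. frechet_derivative F (at x) (axis i 1) $ i)"

text \<open>Squared H^1 norm integrand: |f|^2 + sum of squared first partial derivatives
  (for vector valued f this is the sum of the H^1 integrands of its components).\<close>
definition H1_integrand :: "('a::euclidean_space \<Rightarrow> 'b::euclidean_space) \<Rightarrow> 'a \<Rightarrow> real" where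
  "H1_integrand f x = (norm (f x))^2 + (\<Sum>b\<in>Basis. (norm (frechet_derivative f (at x) b))^2)"

definition H1_bounded_on :: "'a::euclidean_space set \<Rightarrow> ('a \<Rightarrow> 'b::euclidean_space) \<Rightarrow> real \<Rightarrow> bool" where
  "H1_bounded_on S f B \<longleftrightarrow>
     (\<forall>x\<in>S. f differentiable (at x)) \<and>
     (H1_integrand f) integrable_on S \<and> integral S (H1_integrand f) \<le> B"

definition smooth_curve :: "(real \<Rightarrow> 'a::real_normed_vector) \<Rightarrow> bool" where
  "smooth_curve g \<longleftrightarrow>
     (\<forall>k. \<forall>s. (((\<lambda>h y. vector_derivative h (at y)) ^^ k) g) differentiable (at s))"

text \<open>Hausdorff distance between (nonempty, bounded) sets.\<close>
definition hausdist :: "'a::metric_space set \<Rightarrow> 'a set \<Rightarrow> real" where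
  "hausdist S T = max (SUP x\<in>S. infdist x T) (SUP y\<in>T. infdist y S)"

end

theory Submission
  imports Defs "HOL-Complex_Analysis.Complex_Analysis" "HOL-Real_Asymp.Real_Asymp"
begin


lemma ode_decay:
  fixes e w :: "real \<Rightarrow> 'a::real_inner"
  assumes de: "\<And>t. t \<ge> 0 \<Longrightarrow> (e has_vector_derivative w t) (at t within {0..})"
    and dw: "\<And>t. t \<ge> 0 \<Longrightarrow> (w has_vector_derivative (- e t - w t)) (at t within {0..})"
    and t: "t \<ge> 0"
  shows "(norm (e t))^2 \<le> 2 * ((norm (e 0))^2 + (norm (w 0))^2) * exp (- t / 2)"
proof -
  define V where "V s = 3/2 * (e s \<bullet> e s) + e s \<bullet> w s + w s \<bullet> w s" for s
  define W where "W s = V s * exp (s/2)" for s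
  have dV: "(V has_real_derivative (- (e s \<bullet> e s) - w s \<bullet> w s)) (at s within {0..})" if "s \<ge> 0" for s
  proof -
    have 1: "(e has_derivative (\<lambda>h. h *\<^sub>R w s)) (at s within {0..})"
      using de[OF that] by (simp add: has_vector_derivative_def)
    have 2: "(w has_derivative (\<lambda>h. h *\<^sub>R (- e s - w s))) (at s within {0..})"
      using dw[OF that] by (simp add: has_vector_derivative_def)
    have "(V has_derivative (\<lambda>h. 3/2 * (e s \<bullet> h *\<^sub>R w s + h *\<^sub>R w s \<bullet> e s)
       + (e s \<bullet> h *\<^sub>R (- e s - w s) + h *\<^sub>R w s \<bullet> w s)
       + (w s \<bullet> h *\<^sub>R (- e s - w s) + h *\<^sub>R (- e s - w s) \<bullet> w s))) (at s within {0..})"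
      unfolding V_def[abs_def]
      by (intro has_derivative_add has_derivative_mult_right has_derivative_inner 1 2)
    moreover have "(\<lambda>h. 3/2 * (e s \<bullet> h *\<^sub>R w s + h *\<^sub>R w s \<bullet> e s)
       + (e s \<bullet> h *\<^sub>R (- e s - w s) + h *\<^sub>R w s \<bullet> w s)
       + (w s \<bullet> h *\<^sub>R (- e s - w s) + h *\<^sub>R (- e s - w s) \<bullet> w s)) = (*) (- (e s \<bullet> e s) - w s \<bullet> w s)"
      by (rule ext) (simp add: inner_diff_right inner_diff_left inner_commute algebra_simps)
    ultimately show ?thesis by (simp add: has_field_derivative_def)
  qed
  have dW: "(W has_real_derivative (exp (s/2) * ((- (e s \<bullet> e s) - w s \<bullet> w s) + V s / 2))) (at s within {0..})"
    if "s \<ge> 0" for s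
    unfolding W_def[abs_def]
    by (rule derivative_eq_intros dV[OF that] refl | simp)+ (simp add: algebra_simps)
  have Vle: "V s / 2 \<le> e s \<bullet> e s + w s \<bullet> w s" for s
  proof -
    have "0 \<le> (e s - w s) \<bullet> (e s - w s)" by simp
    hence "2 * (e s \<bullet> w s) \<le> e s \<bullet> e s + w s \<bullet> w s"
      by (simp add: inner_diff_right inner_diff_left inner_commute)
    moreover have "0 \<le> e s \<bullet> e s" "0 \<le> w s \<bullet> w s" by simp_all
    moreover have "V s / 2 = 3/4 * (e s \<bullet> e s) + (e s \<bullet> w s)/2 + (w s \<bullet> w s)/2"
      unfolding V_def by simp
    ultimately show ?thesis by linarith
  qed
  have Vge: "e s \<bullet> e s \<le> V s" for s
  proof -
    have "0 \<le> (e s + w s) \<bullet> (e s + w s)" by simp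
    hence "- 2 * (e s \<bullet> w s) \<le> e s \<bullet> e s + w s \<bullet> w s"
      by (simp add: inner_add_right inner_add_left inner_commute)
    moreover have "0 \<le> e s \<bullet> e s" "0 \<le> w s \<bullet> w s" by simp_all
    ultimately show ?thesis unfolding V_def by linarith
  qed
  have Wmono: "W t \<le> W 0"
  proof (cases "t = 0")
    case True then show ?thesis by simp
  next
    case False
    with t have "0 < t" by simp
    have cont: "continuous_on {0..t} W"
    proof (rule continuous_on_subset[of "{0..}"])
      show "continuous_on {0..} W"
        using dW by (intro continuous_on_eq_continuous_within[THEN iffD2] ballI)
          (meson atLeast_iff DERIV_continuous)
    qed auto
    have dif: "W differentiable (at x)" if "0 < x" "x < t" for x
    proof -
      have "(W has_real_derivative (exp (x/2) * ((- (e x \<bullet> e x) - w x \<bullet> w x) + V x / 2))) (at x within {0..})" using dW that by auto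
      moreover have "at x within {0..} = at x"
        using that by (intro at_within_interior) auto
      ultimately show ?thesis
        by (metis real_differentiable_def differentiableI)
    qed
    obtain l z where z: "0 < z" "z < t" "DERIV W z :> l" "W t - W 0 = (t - 0) * l"
      using MVT[OF \<open>0 < t\<close> cont dif] by blast
    have "DERIV W z :> (exp (z/2) * ((- (e z \<bullet> e z) - w z \<bullet> w z) + V z / 2))"
    proof -
      have "at z within {0..} = at z" using z by (intro at_within_interior) auto
      with dW[of z] z show ?thesis by simp
    qed
    with z(3) have "l = exp (z/2) * ((- (e z \<bullet> e z) - w z \<bullet> w z) + V z / 2)"
      using DERIV_unique by blast
    also have "\<dots> \<le> 0" using Vle[of z] by (intro mult_nonneg_nonpos) auto
    finally have "t * l \<le> 0" using \<open>0 < t\<close> by (simp add: mult_nonneg_nonpos)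
    then show ?thesis using z(4) by simp
  qed
  have "(norm (e t))^2 = e t \<bullet> e t" by (simp add: power2_norm_eq_inner)
  also have "\<dots> \<le> V t" by (rule Vge)
  also have "\<dots> = W t * exp (- t / 2)" by (simp add: W_def exp_minus field_simps)
  also have "\<dots> \<le> W 0 * exp (- t / 2)" using Wmono by simp
  also have "W 0 = V 0" by (simp add: W_def)
  also have "V 0 \<le> 2 * ((norm (e 0))^2 + (norm (w 0))^2)"
    using Vle[of 0] by (simp add: power2_norm_eq_inner)
  finally show ?thesis by (simp add: mult_right_mono)
qed



lemma H1_sup_bound:
  fixes w :: "real \<Rightarrow> 'b::euclidean_space"
  assumes H: "H1_bounded_on {0<..<1} w B"
  shows "\<exists>K. \<forall>x\<in>{0<..<1}. norm (w x) \<le> K"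
proof -
  define d where "d x = frechet_derivative w (at x) 1" for x
  define F where "F = H1_integrand w"
  have diff: "\<And>x. x \<in> {0<..<1} \<Longrightarrow> w differentiable (at x)"
    and intF: "F integrable_on {0<..<1}" and intB: "integral {0<..<1} F \<le> B"
    using H unfolding H1_bounded_on_def F_def by auto
  have Fx: "F x = (norm (w x))^2 + (norm (d x))^2" for x
    by (simp add: F_def H1_integrand_def d_def Basis_real_def)
  have F0: "0 \<le> F x" for x by (simp add: Fx)
  have vd: "(w has_vector_derivative d x) (at x)" if "x \<in> {0<..<1}" for x
  proof -
    have "(w has_derivative frechet_derivative w (at x)) (at x)"
      using diff[OF that] frechet_derivative_works by blast
    moreover have "linear (frechet_derivative w (at x))"
      using calculation has_derivative_linear by blast
    then have "frechet_derivative w (at x) = (\<lambda>h. h *\<^sub>R d x)"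
      unfolding d_def proof (intro ext)
      fix h :: real
      show "frechet_derivative w (at x) h = h *\<^sub>R frechet_derivative w (at x) 1"
        using linear_scale[OF \<open>linear _\<close>, of h 1] by simp
    qed
    ultimately show ?thesis by (simp add: has_vector_derivative_def)
  qed
  have sub: "\<And>a b. 0 < a \<Longrightarrow> b < 1 \<Longrightarrow> {a..b} \<subseteq> {0<..<1::real}" by auto
  have intFab: "F integrable_on {a..b}" if "0 < a" "b < 1" for a b
    using integrable_on_subinterval[OF intF sub[OF that]] .
  have leB: "integral {a..b} F \<le> B" if "0 < a" "b < 1" for a b
    using integral_subset_le[OF sub[OF that] intFab[OF that] intF] F0 intB by auto
  define C where "C = 2 * \<bar>B\<bar> + 2"
  obtain g0 where g0: "g0 \<in> {1/4..3/4}" "(norm (w g0))^2 \<le> C"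
  proof (rule ccontr)
    note th = that
    assume "\<not> thesis"
    have all: "C \<le> F x" if xi: "x \<in> {1/4..3/4::real}" for x
    proof -
      have "\<not> (norm (w x))^2 \<le> C" using th[OF xi] \<open>\<not> thesis\<close> by blast
      moreover have "0 \<le> (norm (d x))^2" by simp
      ultimately show ?thesis using Fx[of x] by linarith
    qed
    have "integral {1/4..3/4::real} (\<lambda>x. C) \<le> integral {1/4..3/4} F"
      by (rule integral_le) (auto intro: intFab all)
    moreover have "integral {1/4..3/4::real} (\<lambda>x. C) = C / 2" by simp
    moreover have "integral {1/4..3/4} F \<le> B" by (rule leB) auto
    ultimately show False unfolding C_def using abs_ge_self[of B] by argo
  qed
  have "norm (w x) \<le> sqrt C + (1 + \<bar>B\<bar>) / 2" if x: "x \<in> {0<..<1}" for x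
  proof -
    define a where "a = min x g0"
    define b where "b = max x g0"
    have ab: "0 < a" "b < 1" "a \<le> b" using x g0 by (auto simp: a_def b_def)
    have "(d has_integral (w b - w a)) {a..b}"
      using ab by (intro fundamental_theorem_of_calculus)
        (auto intro!: has_vector_derivative_at_within vd)
    then have eq: "integral {a..b} d = w b - w a" by blast
    have intd: "d integrable_on {a..b}" using \<open>(d has_integral _) _\<close> by blast
    have nd: "norm (d y) \<le> (1 + F y) / 2" for y
    proof -
      have "0 \<le> (norm (d y) - 1)^2" by simp
      then have "2 * norm (d y) \<le> 1 + (norm (d y))^2" by (simp add: power2_diff)
      moreover have "0 \<le> (norm (w y))^2" by simp
      ultimately show ?thesis using Fx[of y] by argo
    qed
    have hF: "(F has_integral integral {a..b} F) {a..b}"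
      using intFab[OF ab(1,2)] by (rule integrable_integral)
    have hg: "((\<lambda>y. (1 + F y) / 2) has_integral (((b - a) + integral {a..b} F) / 2)) {a..b}"
      using has_integral_divide[OF has_integral_add[OF has_integral_const_real[of 1 a b] hF], of 2] ab
      by simp
    have intg: "(\<lambda>y. (1 + F y) / 2) integrable_on {a..b}" using hg by blast
    have "norm (w b - w a) \<le> integral {a..b} (\<lambda>y. (1 + F y) / 2)"
      using integral_norm_bound_integral[OF intd intg nd] eq by simp
    also have "\<dots> = ((b - a) + integral {a..b} F) / 2"
      using hg by blast
    also have "\<dots> \<le> (1 + \<bar>B\<bar>) / 2" using leB[OF ab(1,2)] ab by simp
    finally have 1: "norm (w x - w g0) \<le> (1 + \<bar>B\<bar>) / 2"
      by (cases "x \<le> g0") (auto simp: a_def b_def norm_minus_commute)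
    have 2: "norm (w g0) \<le> sqrt C"
      using g0(2) real_le_rsqrt by blast
    have "norm (w x) \<le> norm (w g0) + norm (w x - w g0)"
      by (metis add.commute diff_add_cancel norm_triangle_ineq)
    with 1 2 show ?thesis by linarith
  qed
  then show ?thesis by blast
qed



lemma comp_in_clopen:
  fixes A K :: "'a::topological_space set"
  assumes "open A" "connected K" "K \<inter> frontier A = {}" "A \<inter> K \<noteq> {}"
  shows "K \<subseteq> A"
proof -
  have "A \<inter> (- closure A) \<inter> K = {}" using closure_subset by blast
  moreover have "K \<subseteq> A \<union> - closure A"
    using assms(1,3) by (auto simp: frontier_def interior_open)
  ultimately have "A \<inter> K = {} \<or> - closure A \<inter> K = {}"
    using connectedD[OF assms(2) assms(1), of "- closure A"] by auto
  with assms(4) have "K \<subseteq> closure A" by blast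
  with assms(1,3) show ?thesis by (auto simp: frontier_def interior_open)
qed

lemma domain_is_inside:
  fixes c :: "real \<Rightarrow> complex"
  assumes c: "simple_path c" "pathfinish c = pathstart c"
    and A: "open A" "bounded A" "connected A" "frontier A = path_image c"
  shows "A = inside (path_image c)"
proof -
  note J = Jordan_inside_outside[OF c]
  have AP: "A \<inter> path_image c = {}" using A by (auto simp: frontier_def interior_open)
  have "A \<noteq> {}"
  proof
    assume "A = {}"
    then have "path_image c = {}" using A(4) by simp
    then show False by (simp add: path_image_def)
  qed
  have "A \<subseteq> inside (path_image c) \<union> outside (path_image c)" using J AP by blast
  then have "inside (path_image c) \<inter> A = {} \<or> outside (path_image c) \<inter> A = {}"
    using connectedD[OF A(3), of "inside (path_image c)" "outside (path_image c)"] J by auto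
  then show ?thesis
  proof
    assume "inside (path_image c) \<inter> A = {}"
    then have "A \<subseteq> outside (path_image c)" using \<open>A \<subseteq> _ \<union> _\<close> by blast
    then have "outside (path_image c) \<subseteq> A"
      using comp_in_clopen[OF A(1), of "outside (path_image c)"] J A(4) \<open>A \<noteq> {}\<close> by auto
    then have "bounded (outside (path_image c))" using A(2) bounded_subset by blast
    with J show ?thesis by blast
  next
    assume "outside (path_image c) \<inter> A = {}"
    then have "A \<subseteq> inside (path_image c)" using \<open>A \<subseteq> _ \<union> _\<close> by blast
    moreover have "inside (path_image c) \<subseteq> A"
      using comp_in_clopen[OF A(1), of "inside (path_image c)"] J A(4) \<open>A \<noteq> {}\<close> calculation by auto
    ultimately show ?thesis by blast
  qed
qed

lemma close_domains_complex:
  fixes c d :: "real \<Rightarrow> complex"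
  assumes c: "simple_path c" "pathfinish c = pathstart c"
    and d: "simple_path d" "pathfinish d = pathstart d"
    and A: "open A" "bounded A" "connected A" "frontier A = path_image c"
    and B: "open B" "bounded B" "connected B" "frontier B = path_image d"
    and close: "\<And>s. s \<in> {0..1} \<Longrightarrow> norm (c s - d s) \<le> \<epsilon>"
    and x: "x \<in> closure A"
  shows "\<exists>y\<in>closure B. dist x y \<le> \<epsilon>"
proof (rule ccontr)
  assume "\<not> ?thesis"
  then have far: "\<And>y. y \<in> closure B \<Longrightarrow> \<epsilon> < dist x y" by force
  have fB: "path_image d \<subseteq> closure B" using B(4) by (auto simp: frontier_def)
  have xA: "x \<in> A"
  proof (rule ccontr)
    assume "x \<notin> A"
    then have "x \<in> path_image c" using x A(1,4) by (auto simp: frontier_def interior_open)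
    then obtain s where s: "s \<in> {0..1}" "x = c s" by (auto simp: path_image_def)
    have "d s \<in> closure B" using fB s(1) by (auto simp: path_image_def)
    with far have "\<epsilon> < dist x (d s)" by blast
    with close[OF s(1)] s(2) show False by (simp add: dist_norm)
  qed
  have "0 \<le> \<epsilon>" using close[of 0] norm_ge_zero[of "c 0 - d 0"] by (simp del: norm_ge_zero)
  then have xB: "x \<notin> closure B" using far[of x] by force
  then have "x \<notin> path_image d" "x \<notin> B" using fB closure_subset by auto
  then have "x \<in> outside (path_image d)"
    using Jordan_inside_outside[OF d] domain_is_inside[OF d B] by blast
  then have w0: "winding_number d x = 0"
    using winding_number_zero_in_outside d simple_path_imp_path by blast
  have "x \<in> inside (path_image c)" using xA domain_is_inside[OF c A] by blast
  then have w1: "winding_number c x \<noteq> 0"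
    by (metis c(1) one_neq_zero neg_equal_0_iff_equal simple_closed_path_winding_number_inside zero_neq_one)
  have "homotopic_loops (- {x}) c d"
  proof (rule homotopic_loops_linear)
    show "path c" "path d" using c d simple_path_imp_path by auto
    show "pathfinish c = pathstart c" "pathfinish d = pathstart d" using c d by auto
    fix s assume s: "s \<in> {0..1::real}"
    show "closed_segment (c s) (d s) \<subseteq> - {x}"
    proof
      fix z assume z: "z \<in> closed_segment (c s) (d s)"
      have "norm (z - d s) \<le> norm (d s - c s)" using segment_bound(2)[OF z] .
      also have "\<dots> \<le> \<epsilon>" using close[OF s] by (simp add: norm_minus_commute)
      finally have "norm (z - d s) \<le> \<epsilon>" .
      moreover have "d s \<in> closure B" using fB s by (auto simp: path_image_def)
      then have "\<epsilon> < dist x (d s)" using far by blast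
      ultimately show "z \<in> - {x}" by (auto simp: dist_norm)
    qed
  qed
  then have "winding_number c x = winding_number d x" by (rule winding_number_homotopic_loops)
  with w0 w1 show False by simp
qed



definition phi :: "real^2 \<Rightarrow> complex" where "phi x = Complex (x$1) (x$2)"

lemma phi_linear: "linear phi"
  by (rule linearI) (simp_all add: phi_def complex_eq_iff)

lemma phi_bij: "bij phi"
proof (rule bijI)
  show "inj phi"
    by (rule injI) (simp add: phi_def vec_eq_iff forall_2 complex_eq_iff)
  show "surj phi"
  proof -
    have "phi (vector [Re z, Im z]) = z" for z by (simp add: phi_def complex_eq_iff)
    then show ?thesis by (metis surj_def)
  qed
qed

lemma phi_norm: "norm (phi x) = norm x"
  by (simp add: phi_def norm_vec_def L2_set_def sum_2 cmod_def)

lemma phi_frontier: "frontier (phi ` S) = phi ` frontier S"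
  using closure_injective_linear_image[OF phi_linear bij_is_inj[OF phi_bij]]
    interior_bijective_linear_image[OF phi_linear phi_bij]
  by (simp add: frontier_def image_set_diff[OF bij_is_inj[OF phi_bij]])

lemma close_domains:
  fixes p q :: "real \<Rightarrow> real^2"
  assumes c: "simple_path p" "pathfinish p = pathstart p"
    and d: "simple_path q" "pathfinish q = pathstart q"
    and A: "open M" "bounded M" "connected M" "frontier M = path_image p"
    and B: "open N" "bounded N" "connected N" "frontier N = path_image q"
    and close: "\<And>s. s \<in> {0..1} \<Longrightarrow> norm (p s - q s) \<le> \<epsilon>"
    and x: "x \<in> closure M"
  shows "\<exists>y\<in>closure N. dist x y \<le> \<epsilon>"
proof -
  note lin = phi_linear and bj = phi_bij and ij = bij_is_inj[OF phi_bij]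
  have sp: "simple_path (phi \<circ> g) = simple_path g" for g :: "real \<Rightarrow> real^2"
    by (rule simple_path_linear_image_eq[OF lin ij])
  have props: "open (phi ` S) \<and> bounded (phi ` S) \<and> connected (phi ` S)"
    if "open S" "bounded S" "connected S" for S
    using that open_bijective_linear_image_eq[OF lin bj] bounded_linear_image[OF _ linear_conv_bounded_linear[THEN iffD1, OF lin]]
      connected_linear_image[OF lin] by auto
  have "\<exists>y\<in>closure (phi ` N). dist (phi x) y \<le> \<epsilon>"
  proof (rule close_domains_complex[of "phi \<circ> p" "phi \<circ> q" "phi ` M" "phi ` N"])
    show "simple_path (phi \<circ> p)" "simple_path (phi \<circ> q)" using c d sp by auto
    show "pathfinish (phi \<circ> p) = pathstart (phi \<circ> p)" "pathfinish (phi \<circ> q) = pathstart (phi \<circ> q)"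
      using c d by (simp_all add: pathfinish_compose pathstart_compose)
    show "open (phi ` M)" "bounded (phi ` M)" "connected (phi ` M)" using props A by auto
    show "open (phi ` N)" "bounded (phi ` N)" "connected (phi ` N)" using props B by auto
    show "frontier (phi ` M) = path_image (phi \<circ> p)" "frontier (phi ` N) = path_image (phi \<circ> q)"
      using A B by (simp_all add: phi_frontier path_image_compose)
    show "norm ((phi \<circ> p) s - (phi \<circ> q) s) \<le> \<epsilon>" if "s \<in> {0..1}" for s
      using close[OF that] by (simp add: linear_diff[OF lin, symmetric] phi_norm)
    show "phi x \<in> closure (phi ` M)"
      using x closure_injective_linear_image[OF lin ij, of M] by auto
  qed
  then obtain y' where y': "y' \<in> closure (phi ` N)" "dist (phi x) y' \<le> \<epsilon>" by blast
  then obtain y where "y \<in> closure N" "y' = phi y"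
    using closure_injective_linear_image[OF lin ij, of N] by (metis imageE)
  with y' have "y \<in> closure N" "dist (phi x) (phi y) \<le> \<epsilon>" by auto
  then show ?thesis
    by (metis dist_norm linear_diff[OF lin] phi_norm)
qed



lemma hausdist_le:
  fixes S T :: "'a::metric_space set"
  assumes "S \<noteq> {}" "T \<noteq> {}" "0 \<le> \<epsilon>"
    and "\<And>x. x \<in> S \<Longrightarrow> \<exists>y\<in>T. dist x y \<le> \<epsilon>"
    and "\<And>y. y \<in> T \<Longrightarrow> \<exists>x\<in>S. dist y x \<le> \<epsilon>"
  shows "\<bar>hausdist S T\<bar> \<le> \<epsilon>"
proof -
  have 1: "infdist x T \<le> \<epsilon>" if "x \<in> S" for x
    using assms(4)[OF that] infdist_le by (meson order_trans)
  have 2: "infdist y S \<le> \<epsilon>" if "y \<in> T" for y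
    using assms(5)[OF that] infdist_le by (meson order_trans)
  have a: "(SUP x\<in>S. infdist x T) \<le> \<epsilon>" using 1 assms(1) by (intro cSUP_least) auto
  have b: "(SUP y\<in>T. infdist y S) \<le> \<epsilon>" using 2 assms(2) by (intro cSUP_least) auto
  obtain x0 where "x0 \<in> S" using assms(1) by blast
  have "bdd_above ((\<lambda>x. infdist x T) ` S)" using 1 by (intro bdd_aboveI2) auto
  then have "infdist x0 T \<le> (SUP x\<in>S. infdist x T)" using \<open>x0 \<in> S\<close> by (rule cSUP_upper2) auto
  then have "0 \<le> (SUP x\<in>S. infdist x T)" using infdist_nonneg order_trans by blast
  with a b show ?thesis unfolding hausdist_def by auto
qed



theorem mainTheorem5:
  fixes M :: "real \<Rightarrow> (real^2) set"
    and rho :: "real \<Rightarrow> real^2 \<Rightarrow> real"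
    and v :: "real \<Rightarrow> real^2 \<Rightarrow> real^2"
    and r :: "real \<Rightarrow> real \<Rightarrow> real^2"
    and rstar :: "real \<Rightarrow> real^2"
    and Mstar :: "(real^2) set"
  assumes dom: "\<And>t. t \<ge> 0 \<Longrightarrow> open (M t) \<and> bounded (M t) \<and> simply_connected (M t)"
    and bdry: "\<And>t. t \<ge> 0 \<Longrightarrow> simple_path (r t) \<and> pathfinish (r t) = pathstart (r t)
                  \<and> path_image (r t) = frontier (M t)"
    and target: "open Mstar \<and> bounded Mstar \<and> simply_connected Mstar"
    and target_bdry: "simple_path rstar \<and> pathfinish rstar = pathstart rstar
                  \<and> path_image rstar = frontier Mstar"
    and init_smooth: "smooth_curve (r 0) \<and> (\<forall>\<gamma>. r 0 (\<gamma> + 1) = r 0 \<gamma>)"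
    and rho_pos: "\<And>t x. t \<ge> 0 \<Longrightarrow> x \<in> closure (M t) \<Longrightarrow> rho t x > 0"
    and rho_supp: "\<And>t x. t \<ge> 0 \<Longrightarrow> x \<notin> closure (M t) \<Longrightarrow> rho t x = 0"
    and rho_mass: "\<And>t. t \<ge> 0 \<Longrightarrow> (rho t has_integral 1) (M t)"
    and rho_smooth: "\<And>t x. t \<ge> 0 \<Longrightarrow> x \<in> M t \<Longrightarrow>
                  rho t differentiable (at x) \<and> (\<lambda>y. rho t y *\<^sub>R v t y) differentiable (at x)"
    and continuity_eq: "\<And>t x. t > 0 \<Longrightarrow> x \<in> M t \<Longrightarrow>
                  ((\<lambda>s. rho s x) has_real_derivative
                     - divergence (\<lambda>y. rho t y *\<^sub>R v t y) x) (at t)"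
    and control_interior: "\<And>t x. t \<ge> 0 \<Longrightarrow> x \<in> M t \<Longrightarrow>
                  v t x = - ((1 / rho t x) *\<^sub>R grad (rho t) x)"
    and boundary_kin: "\<And>t \<gamma>. t \<ge> 0 \<Longrightarrow> \<gamma> \<in> {0..1} \<Longrightarrow>
                  ((\<lambda>s. r s \<gamma>) has_vector_derivative v t (r t \<gamma>)) (at t within {0..})"
    and control_boundary: "\<And>t \<gamma>. t \<ge> 0 \<Longrightarrow> \<gamma> \<in> {0..1} \<Longrightarrow>
                  ((\<lambda>s. v s (r s \<gamma>)) has_vector_derivative
                     (- (r t \<gamma> - rstar \<gamma>) - v t (r t \<gamma>))) (at t within {0..})"
    and rho_H1: "\<exists>B. \<forall>t\<ge>0. H1_bounded_on (M t) (rho t) B"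
    and v_H1: "\<exists>B. \<forall>t\<ge>0. H1_bounded_on (M t) (v t) B"
    and vb_H1: "\<exists>B. \<forall>t\<ge>0. H1_bounded_on {0<..<1} (\<lambda>\<gamma>. v t (r t \<gamma>)) B"
  shows "((\<lambda>t. hausdist (closure (M t)) (closure Mstar)) \<longlongrightarrow> 0) at_top"
proof -
  obtain Bv where Bv: "H1_bounded_on {0<..<1} (\<lambda>\<gamma>. v 0 (r 0 \<gamma>)) Bv"
    using vb_H1 by auto
  obtain K where K: "\<And>\<gamma>. \<gamma> \<in> {0<..<1} \<Longrightarrow> norm (v 0 (r 0 \<gamma>)) \<le> K"
    using H1_sup_bound[OF Bv] by blast
  define K' where "K' = \<bar>K\<bar> + norm (v 0 (r 0 0)) + norm (v 0 (r 0 1))"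
  have wb: "norm (v 0 (r 0 \<gamma>)) \<le> K'" if g: "\<gamma> \<in> {0..1}" for \<gamma>
  proof -
    consider "\<gamma> = 0" | "\<gamma> = 1" | "\<gamma> \<in> {0<..<1}" using g by fastforce
    then show ?thesis
    proof cases
      case 3 then show ?thesis using K[OF 3] unfolding K'_def
        by (smt (verit) norm_ge_zero)
    qed (auto simp: K'_def)
  qed
  have b0: "bounded (path_image (r 0))" "bounded (path_image rstar)"
    using bdry[of 0] target_bdry by (meson bounded_path_image simple_path_imp_path order_refl)+
  obtain E1 where E1: "\<And>y. y \<in> path_image (r 0) \<Longrightarrow> norm y \<le> E1"
    using b0(1) bounded_iff by blast
  obtain E2 where E2: "\<And>y. y \<in> path_image rstar \<Longrightarrow> norm y \<le> E2"
    using b0(2) bounded_iff by blast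
  define E where "E = E1 + E2"
  have eb: "norm (r 0 \<gamma> - rstar \<gamma>) \<le> E" if "\<gamma> \<in> {0..1}" for \<gamma>
  proof -
    have "norm (r 0 \<gamma>) \<le> E1" "norm (rstar \<gamma>) \<le> E2"
      using E1 E2 that by (auto simp: path_image_def)
    then show ?thesis unfolding E_def by (smt (verit) norm_triangle_ineq4)
  qed
  define D where "D = 2 * (E^2 + K'^2)"
  define \<epsilon> where "\<epsilon> t = sqrt (D * exp (- t / 2))" for t
  have close: "norm (r t \<gamma> - rstar \<gamma>) \<le> \<epsilon> t" if t: "t \<ge> 0" and g: "\<gamma> \<in> {0..1}" for t \<gamma>
  proof -
    have "(norm (r t \<gamma> - rstar \<gamma>))^2
          \<le> 2 * ((norm (r 0 \<gamma> - rstar \<gamma>))^2 + (norm (v 0 (r 0 \<gamma>)))^2) * exp (- t / 2)"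
    proof (rule ode_decay[where e = "\<lambda>s. r s \<gamma> - rstar \<gamma>" and w = "\<lambda>s. v s (r s \<gamma>)", OF _ _ t])
      fix s :: real assume s: "s \<ge> 0"
      show "((\<lambda>s. r s \<gamma> - rstar \<gamma>) has_vector_derivative v s (r s \<gamma>)) (at s within {0..})"
        using has_vector_derivative_diff[OF boundary_kin[OF s g] has_vector_derivative_const[of "rstar \<gamma>"]]
        by simp
      show "((\<lambda>s. v s (r s \<gamma>)) has_vector_derivative (- (r s \<gamma> - rstar \<gamma>) - v s (r s \<gamma>))) (at s within {0..})"
        using control_boundary[OF s g] .
    qed
    also have "\<dots> \<le> D * exp (- t / 2)"
    proof -
      have "(norm (r 0 \<gamma> - rstar \<gamma>))^2 \<le> E^2"
        using eb[OF g] by (intro power_mono) auto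
      moreover have "(norm (v 0 (r 0 \<gamma>)))^2 \<le> K'^2"
        using wb[OF g] by (intro power_mono) auto
      ultimately show ?thesis unfolding D_def by (intro mult_right_mono) auto
    qed
    finally show ?thesis unfolding \<epsilon>_def by (intro real_le_rsqrt)
  qed
  have haus: "\<bar>hausdist (closure (M t)) (closure Mstar)\<bar> \<le> \<epsilon> t" if t: "t \<ge> 0" for t
  proof -
    have Mt: "open (M t)" "bounded (M t)" "connected (M t)"
      using dom[OF t] simply_connected_imp_connected by auto
    have Ms: "open Mstar" "bounded Mstar" "connected Mstar"
      using target simply_connected_imp_connected by auto
    have ne: "S \<noteq> {}" if "frontier S = path_image g" for S :: "(real^2) set" and g
    proof
      assume "S = {}"
      with that show False by (simp add: path_image_def)
    qed
    show ?thesis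
    proof (rule hausdist_le)
      show "closure (M t) \<noteq> {}" using ne[of "M t" "r t"] bdry[OF t] by (simp add: closure_eq_empty)
      show "closure Mstar \<noteq> {}" using ne[of Mstar rstar] target_bdry by (simp add: closure_eq_empty)
      show "0 \<le> \<epsilon> t" unfolding \<epsilon>_def D_def by simp
      show "\<exists>y\<in>closure Mstar. dist x y \<le> \<epsilon> t" if "x \<in> closure (M t)" for x
        using close_domains[of "r t" rstar "M t" Mstar "\<epsilon> t" x] bdry[OF t] target_bdry Mt Ms
          close[OF t] that by auto
      show "\<exists>y\<in>closure (M t). dist x y \<le> \<epsilon> t" if "x \<in> closure Mstar" for x
        using close_domains[of rstar "r t" Mstar "M t" "\<epsilon> t" x] bdry[OF t] target_bdry Mt Ms
          close[OF t] that by (auto simp: norm_minus_commute)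
    qed
  qed
  have lim: "(\<epsilon> \<longlongrightarrow> 0) at_top"
  proof -
    have "((\<lambda>t::real. exp (- t / 2)) \<longlongrightarrow> 0) at_top" by real_asymp
    then have "((\<lambda>t. D * exp (- t / 2)) \<longlongrightarrow> 0) at_top" by (rule tendsto_mult_right_zero)
    then have "((\<lambda>t. sqrt (D * exp (- t / 2))) \<longlongrightarrow> sqrt 0) at_top" by (rule tendsto_real_sqrt)
    then show ?thesis unfolding \<epsilon>_def[abs_def] by simp
  qed
  show ?thesis
  proof (rule Lim_null_comparison[OF _ lim])
    show "\<forall>\<^sub>F t in at_top. norm (hausdist (closure (M t)) (closure Mstar)) \<le> \<epsilon> t"
      using eventually_ge_at_top[of "0::real"] by eventually_elim (use haus in auto)
  qed
qed

end
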